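(* Let $(M,\pi)$ be a partial $H$-module with standard dilation $((\overline M,T_\pi),\varphi)$. (i) For any proper dilation $((N,T),\theta)$ of $M$, there is a unique surjective $H$-linear map $\Phi:N\to\overline M$ such that $T_\pi\circ\Phi=\Phi\circ T$ and $\Phi\circ\theta=\varphi$. (ii) The map $\Phi$ is injective (hence bijective) if and only if the dilation $((N,T),\theta)$ is minimal.
   Context: Throughout, $k$ is a field and $H$ is a Hopf algebra over $k$ with bijective antipode $S$ and Sweedler notation $\Delta(h)=h_{(1)}\otimes h_{(2)}$. A partial $H$-module is a vector space $M$ with linear $\pi:H\to\mathrm{End}_k(M)$ satisfying, for all $h,k\in H$: - $\pi(1_H)=\mathrm{id}$; - $\pi(h)\pi(k_{(1)})\pi(S(k_{(2)}))=\pi(hk_{(1)})\pi(S(k_{(2)}))$; - $\pi(h_{(1)})\pi(S(h_{(2)}))\pi(k)=\pi(h_{(1)})\pi(S(h_{(2)})k)$; - $\pi(h)\pi(S(k_{(1)}))\pi(k_{(2)})=\pi(hS(k_{(1)}))\pi(k_{(2)})$; - $\pi(S(h_{(1)}))\pi(h_{(2)})\pi(k)=\pi(S(h_{(1)}))\pi(h_{(2)}k)$. Morphisms are linear maps commuting with all $\pi(h)$. For a left $H$-module $N$ (action $\triangleright$) and linear projection $T$, put $T_h(x)=h_{(1)}\triangleright T(S(h_{(2)})\triangleright x)$. $T$ satisfies the c-condition if $T_h\circ T=T\circ T_h$ for all $h$; then $T(N)$ is a partial $H$-module via $\pi_T(h)(x)=T(h\triangleright x)$. A dilation of $(M,\pi)$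 is $((N,T),\theta)$ with $N$ a left $H$-module, $T$ a projection on $N$ satisfying the c-condition, and $\theta:M\to T(N)$ an isomorphism of partial $H$-modules onto $(T(N),\pi_T)$. It is proper if $N$ is generated as an $H$-module by $\theta(M)$. It is minimal if $N$ contains no nonzero $H$-submodule annihilated by $T$. Standard dilation: $\operatorname{Hom}_k(H,M)$ is a left $H$-module via $(h\triangleright f)(k)=f(kh)$. Set $\varphi(m)(h)=\pi(h)(m)$, $\overline M=H\triangleright\varphi(M)\subseteq\operatorname{Hom}_k(H,M)$, and $T_\pi(f)=\varphi(f(1_H))$. *)

theory Defs
  imports Complex_Main "HOL-Library.Function_Algebras"
begin

text \<open>An element of H (x) H is represented by a finite list of pairs (a_i,b_i),
  standing for the sum of the a_i (x) b_i.  Two such lists represent the same tensor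
  iff they agree under all products of linear functionals (this characterizes
  equality in the algebraic tensor product over a field).\<close>

definition tensor2_eq ::
  "('k::field \<Rightarrow> 'h::ab_group_add \<Rightarrow> 'h) \<Rightarrow> ('h \<times> 'h) list \<Rightarrow> ('h \<times> 'h) list \<Rightarrow> bool" where
  "tensor2_eq sc xs ys \<longleftrightarrow>
     (\<forall>f g. Vector_Spaces.linear sc (*) f \<and> Vector_Spaces.linear sc (*) g \<longrightarrow>
        (\<Sum>(a,b)\<leftarrow>xs. f a * g b) = (\<Sum>(a,b)\<leftarrow>ys. f a * g b))"

definition tensor3_eq ::
  "('k::field \<Rightarrow> 'h::ab_group_add \<Rightarrow> 'h) \<Rightarrow> ('h \<times> 'h \<times> 'h) list \<Rightarrow> ('h \<times> 'h \<times> 'h) list \<Rightarrow> bool" where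
  "tensor3_eq sc xs ys \<longleftrightarrow>
     (\<forall>f g u. Vector_Spaces.linear sc (*) f \<and> Vector_Spaces.linear sc (*) g \<and> Vector_Spaces.linear sc (*) u \<longrightarrow>
        (\<Sum>(a,b,c)\<leftarrow>xs. f a * g b * u c) = (\<Sum>(a,b,c)\<leftarrow>ys. f a * g b * u c))"

text \<open>H is a k-algebra: a ring_1 with a compatible k-vector space structure sc.
  Delta h is a list representing h_(1) (x) h_(2).\<close>

definition hopf_algebra ::
  "('k::field \<Rightarrow> 'h::ring_1 \<Rightarrow> 'h) \<Rightarrow> ('h \<Rightarrow> ('h \<times> 'h) list) \<Rightarrow> ('h \<Rightarrow> 'k) \<Rightarrow> ('h \<Rightarrow> 'h) \<Rightarrow> bool" where
  "hopf_algebra sc \<Delta> \<epsilon> S \<longleftrightarrow>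
     vector_space sc \<and>
     (\<forall>c x y. sc c (x * y) = sc c x * y \<and> sc c (x * y) = x * sc c y) \<and>
     \<comment> \<open>comultiplication: linear, coassociative\<close>
     (\<forall>x y. tensor2_eq sc (\<Delta> (x + y)) (\<Delta> x @ \<Delta> y)) \<and>
     (\<forall>c x. tensor2_eq sc (\<Delta> (sc c x)) (map (\<lambda>(a,b). (sc c a, b)) (\<Delta> x))) \<and>
     (\<forall>h. tensor3_eq sc
          (concat (map (\<lambda>(a,b). map (\<lambda>(a1,a2). (a1,a2,b)) (\<Delta> a)) (\<Delta> h)))
          (concat (map (\<lambda>(a,b). map (\<lambda>(b1,b2). (a,b1,b2)) (\<Delta> b)) (\<Delta> h)))) \<and>
     \<comment> \<open>counit\<close>
     Vector_Spaces.linear sc (*) \<epsilon> \<and>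
     (\<forall>h. (\<Sum>(a,b)\<leftarrow>\<Delta> h. sc (\<epsilon> a) b) = h) \<and>
     (\<forall>h. (\<Sum>(a,b)\<leftarrow>\<Delta> h. sc (\<epsilon> b) a) = h) \<and>
     \<comment> \<open>bialgebra: Delta and epsilon are algebra maps\<close>
     (\<forall>x y. tensor2_eq sc (\<Delta> (x * y))
          (concat (map (\<lambda>(a,b). map (\<lambda>(c,d). (a * c, b * d)) (\<Delta> y)) (\<Delta> x)))) \<and>
     tensor2_eq sc (\<Delta> 1) [(1,1)] \<and>
     (\<forall>x y. \<epsilon> (x * y) = \<epsilon> x * \<epsilon> y) \<and> \<epsilon> 1 = 1 \<and>
     \<comment> \<open>antipode, assumed bijective\<close>
     Vector_Spaces.linear sc sc S \<and>
     (\<forall>h. (\<Sum>(a,b)\<leftarrow>\<Delta> h. S a * b) = sc (\<epsilon> h) 1) \<and>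
     (\<forall>h. (\<Sum>(a,b)\<leftarrow>\<Delta> h. a * S b) = sc (\<epsilon> h) 1) \<and>
     bij S"

definition partial_module ::
  "('k::field \<Rightarrow> 'h::ring_1 \<Rightarrow> 'h) \<Rightarrow> ('h \<Rightarrow> ('h \<times> 'h) list) \<Rightarrow> ('h \<Rightarrow> 'h)
   \<Rightarrow> ('k \<Rightarrow> 'm::ab_group_add \<Rightarrow> 'm) \<Rightarrow> ('h \<Rightarrow> 'm \<Rightarrow> 'm) \<Rightarrow> bool" where
  "partial_module sc \<Delta> S scM \<pi> \<longleftrightarrow>
     vector_space scM \<and>
     \<comment> \<open>pi : H -> End_k(M) is k-linear\<close>
     (\<forall>h. Vector_Spaces.linear scM scM (\<pi> h)) \<and>
     (\<forall>x y m. \<pi> (x + y) m = \<pi> x m + \<pi> y m) \<and>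
     (\<forall>c x m. \<pi> (sc c x) m = scM c (\<pi> x m)) \<and>
     (\<forall>m. \<pi> 1 m = m) \<and>
     (\<forall>h k m. (\<Sum>(a,b)\<leftarrow>\<Delta> k. \<pi> h (\<pi> a (\<pi> (S b) m))) = (\<Sum>(a,b)\<leftarrow>\<Delta> k. \<pi> (h * a) (\<pi> (S b) m))) \<and>
     (\<forall>h k m. (\<Sum>(a,b)\<leftarrow>\<Delta> h. \<pi> a (\<pi> (S b) (\<pi> k m))) = (\<Sum>(a,b)\<leftarrow>\<Delta> h. \<pi> a (\<pi> (S b * k) m))) \<and>
     (\<forall>h k m. (\<Sum>(a,b)\<leftarrow>\<Delta> k. \<pi> h (\<pi> (S a) (\<pi> b m))) = (\<Sum>(a,b)\<leftarrow>\<Delta> k. \<pi> (h * S a) (\<pi> b m))) \<and>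
     (\<forall>h k m. (\<Sum>(a,b)\<leftarrow>\<Delta> h. \<pi> (S a) (\<pi> b (\<pi> k m))) = (\<Sum>(a,b)\<leftarrow>\<Delta> h. \<pi> (S a) (\<pi> (b * k) m)))"

definition h_module ::
  "('k::field \<Rightarrow> 'h::ring_1 \<Rightarrow> 'h) \<Rightarrow> ('k \<Rightarrow> 'n::ab_group_add \<Rightarrow> 'n) \<Rightarrow> ('h \<Rightarrow> 'n \<Rightarrow> 'n) \<Rightarrow> bool" where
  "h_module sc scN act \<longleftrightarrow>
     vector_space scN \<and>
     (\<forall>h. Vector_Spaces.linear scN scN (act h)) \<and>
     (\<forall>x y n. act (x + y) n = act x n + act y n) \<and>
     (\<forall>c x n. act (sc c x) n = scN c (act x n)) \<and>
     (\<forall>n. act 1 n = n) \<and>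
     (\<forall>x y n. act (x * y) n = act x (act y n))"

definition h_submodule ::
  "('k::field \<Rightarrow> 'n::ab_group_add \<Rightarrow> 'n) \<Rightarrow> ('h \<Rightarrow> 'n \<Rightarrow> 'n) \<Rightarrow> 'n set \<Rightarrow> bool" where
  "h_submodule scN act W \<longleftrightarrow> module.subspace scN W \<and> (\<forall>h x. x \<in> W \<longrightarrow> act h x \<in> W)"

definition is_projection :: "('k::field \<Rightarrow> 'n::ab_group_add \<Rightarrow> 'n) \<Rightarrow> ('n \<Rightarrow> 'n) \<Rightarrow> bool" where
  "is_projection scN T \<longleftrightarrow> Vector_Spaces.linear scN scN T \<and> (\<forall>x. T (T x) = T x)"

definition T_twist ::
  "('h \<Rightarrow> ('h \<times> 'h) list) \<Rightarrow> ('h \<Rightarrow> 'h) \<Rightarrow> ('h \<Rightarrow> 'n::ab_group_add \<Rightarrow> 'n) \<Rightarrow> ('n \<Rightarrow> 'n) \<Rightarrow> 'h \<Rightarrow> 'n \<Rightarrow> 'n" where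
  "T_twist \<Delta> S act T h x = (\<Sum>(a,b)\<leftarrow>\<Delta> h. act a (T (act (S b) x)))"

definition c_condition ::
  "('h \<Rightarrow> ('h \<times> 'h) list) \<Rightarrow> ('h \<Rightarrow> 'h) \<Rightarrow> ('h \<Rightarrow> 'n::ab_group_add \<Rightarrow> 'n) \<Rightarrow> ('n \<Rightarrow> 'n) \<Rightarrow> bool" where
  "c_condition \<Delta> S act T \<longleftrightarrow> (\<forall>h x. T_twist \<Delta> S act T h (T x) = T (T_twist \<Delta> S act T h x))"

definition is_dilation ::
  "('k::field \<Rightarrow> 'h::ring_1 \<Rightarrow> 'h) \<Rightarrow> ('h \<Rightarrow> ('h \<times> 'h) list) \<Rightarrow> ('h \<Rightarrow> 'h)
   \<Rightarrow> ('k \<Rightarrow> 'm::ab_group_add \<Rightarrow> 'm) \<Rightarrow> ('h \<Rightarrow> 'm \<Rightarrow> 'm)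
   \<Rightarrow> ('k \<Rightarrow> 'n::ab_group_add \<Rightarrow> 'n) \<Rightarrow> ('h \<Rightarrow> 'n \<Rightarrow> 'n) \<Rightarrow> ('n \<Rightarrow> 'n) \<Rightarrow> ('m \<Rightarrow> 'n) \<Rightarrow> bool" where
  "is_dilation sc \<Delta> S scM \<pi> scN act T \<theta> \<longleftrightarrow>
     h_module sc scN act \<and> is_projection scN T \<and> c_condition \<Delta> S act T \<and>
     Vector_Spaces.linear scM scN \<theta> \<and> bij_betw \<theta> UNIV (range T) \<and>
     (\<forall>h m. \<theta> (\<pi> h m) = T (act h (\<theta> m)))"

definition proper_dilation ::
  "('k::field \<Rightarrow> 'n::ab_group_add \<Rightarrow> 'n) \<Rightarrow> ('h \<Rightarrow> 'n \<Rightarrow> 'n) \<Rightarrow> ('m \<Rightarrow> 'n) \<Rightarrow> bool" where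
  "proper_dilation scN act \<theta> \<longleftrightarrow>
     (\<forall>W. h_submodule scN act W \<and> range \<theta> \<subseteq> W \<longrightarrow> W = UNIV)"

definition minimal_dilation ::
  "('k::field \<Rightarrow> 'n::ab_group_add \<Rightarrow> 'n) \<Rightarrow> ('h \<Rightarrow> 'n \<Rightarrow> 'n) \<Rightarrow> ('n \<Rightarrow> 'n) \<Rightarrow> bool" where
  "minimal_dilation scN act T \<longleftrightarrow>
     (\<forall>W. h_submodule scN act W \<and> T ` W \<subseteq> {0} \<longrightarrow> W = {0})"

text \<open>Hom_k(H,M) is modelled as functions H -> M (the relevant ones are k-linear);
  scalar multiplication pointwise, addition pointwise (Function_Algebras).\<close>

definition hom_scale :: "('k \<Rightarrow> 'm \<Rightarrow> 'm) \<Rightarrow> 'k \<Rightarrow> ('h \<Rightarrow> 'm) \<Rightarrow> ('h \<Rightarrow> 'm)" where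
  "hom_scale scM c f = (\<lambda>k. scM c (f k))"

definition hom_act :: "'h::times \<Rightarrow> ('h \<Rightarrow> 'm) \<Rightarrow> ('h \<Rightarrow> 'm)" where
  "hom_act h f = (\<lambda>k. f (k * h))"

definition std_phi :: "('h \<Rightarrow> 'm \<Rightarrow> 'm) \<Rightarrow> 'm \<Rightarrow> ('h \<Rightarrow> 'm)" where
  "std_phi \<pi> m = (\<lambda>h. \<pi> h m)"

definition Mbar :: "('k::field \<Rightarrow> 'm::ab_group_add \<Rightarrow> 'm) \<Rightarrow> ('h::times \<Rightarrow> 'm \<Rightarrow> 'm) \<Rightarrow> ('h \<Rightarrow> 'm) set" where
  "Mbar scM \<pi> = module.span (hom_scale scM) {hom_act h (std_phi \<pi> m) | h m. True}"

definition T_std :: "('h::one \<Rightarrow> 'm \<Rightarrow> 'm) \<Rightarrow> ('h \<Rightarrow> 'm) \<Rightarrow> ('h \<Rightarrow> 'm)" where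
  "T_std \<pi> f = std_phi \<pi> (f 1)"

definition dilation_comparison_map ::
  "('k::field \<Rightarrow> 'm::ab_group_add \<Rightarrow> 'm) \<Rightarrow> ('h::ring_1 \<Rightarrow> 'm \<Rightarrow> 'm)
   \<Rightarrow> ('k \<Rightarrow> 'n::ab_group_add \<Rightarrow> 'n) \<Rightarrow> ('h \<Rightarrow> 'n \<Rightarrow> 'n) \<Rightarrow> ('n \<Rightarrow> 'n) \<Rightarrow> ('m \<Rightarrow> 'n)
   \<Rightarrow> ('n \<Rightarrow> ('h \<Rightarrow> 'm)) \<Rightarrow> bool" where
  "dilation_comparison_map scM \<pi> scN act T \<theta> \<Phi> \<longleftrightarrow>
     Vector_Spaces.linear scN (hom_scale scM) \<Phi> \<and>
     (\<forall>h x. \<Phi> (act h x) = hom_act h (\<Phi> x)) \<and>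
     range \<Phi> = Mbar scM \<pi> \<and>
     (\<forall>x. T_std \<pi> (\<Phi> x) = \<Phi> (T x)) \<and>
     (\<forall>m. \<Phi> (\<theta> m) = std_phi \<pi> m)"

end

theory Submission
  imports Defs
begin

lemma vs_hom_scale:
  assumes "vector_space scM"
  shows "vector_space (hom_scale scM)"
proof -
  interpret M: vector_space scM by fact
  show ?thesis
    by unfold_locales (auto simp: hom_scale_def fun_eq_iff M.scale_right_distrib M.scale_left_distrib)
qed

theorem mainTheorem10:
  fixes sc :: "'k::field \<Rightarrow> 'h::ring_1 \<Rightarrow> 'h"
    and \<Delta> :: "'h \<Rightarrow> ('h \<times> 'h) list" and \<epsilon> :: "'h \<Rightarrow> 'k" and S :: "'h \<Rightarrow> 'h"
    and scM :: "'k \<Rightarrow> 'm::ab_group_add \<Rightarrow> 'm" and \<pi> :: "'h \<Rightarrow> 'm \<Rightarrow> 'm"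
    and scN :: "'k \<Rightarrow> 'n::ab_group_add \<Rightarrow> 'n" and act :: "'h \<Rightarrow> 'n \<Rightarrow> 'n"
    and T :: "'n \<Rightarrow> 'n" and \<theta> :: "'m \<Rightarrow> 'n"
  assumes "hopf_algebra sc \<Delta> \<epsilon> S"
    and "partial_module sc \<Delta> S scM \<pi>"
    and "is_dilation sc \<Delta> S scM \<pi> scN act T \<theta>"
    and "proper_dilation scN act \<theta>"
  shows "(\<exists>!\<Phi>. dilation_comparison_map scM \<pi> scN act T \<theta> \<Phi>) \<and>
         (\<forall>\<Phi>. dilation_comparison_map scM \<pi> scN act T \<theta> \<Phi> \<longrightarrow>
                (inj \<Phi> \<longleftrightarrow> minimal_dilation scN act T))"
proof -
  have vsM: "vector_space scM" and pi1: "\<And>m. \<pi> 1 m = m"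
    using assms(2) unfolding partial_module_def by auto
  have hmod: "h_module sc scN act" and projT: "is_projection scN T"
    and linth: "Vector_Spaces.linear scM scN \<theta>" and bij: "bij_betw \<theta> UNIV (range T)"
    and inter: "\<And>h m. \<theta> (\<pi> h m) = T (act h (\<theta> m))"
    using assms(3) unfolding is_dilation_def by auto
  have vsN: "vector_space scN" and act_lin: "\<And>h. Vector_Spaces.linear scN scN (act h)"
    and act1: "\<And>n. act 1 n = n" and actmul: "\<And>x y n. act (x * y) n = act x (act y n)"
    using hmod unfolding h_module_def by auto
  have linT: "Vector_Spaces.linear scN scN T" and TT: "\<And>x. T (T x) = T x"
    using projT unfolding is_projection_def by auto
  have vsH: "vector_space (hom_scale scM)" using vs_hom_scale[OF vsM] .
  interpret M: vector_space scM by (rule vsM)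
  interpret N: vector_space scN by (rule vsN)
  interpret MH: vector_space "hom_scale scM" by (rule vsH)
  have Tadd: "\<And>x y. T (x + y) = T x + T y" and Tsc: "\<And>c x. T (scN c x) = scN c (T x)"
    using linT unfolding Vector_Spaces.linear_iff by auto
  have aadd: "\<And>h x y. act h (x + y) = act h x + act h y"
    and asc: "\<And>h c x. act h (scN c x) = scN c (act h x)"
    using act_lin unfolding Vector_Spaces.linear_iff by auto
  have thadd: "\<And>x y. \<theta> (x + y) = \<theta> x + \<theta> y" and thsc: "\<And>c x. \<theta> (scM c x) = scN c (\<theta> x)"
    using linth unfolding Vector_Spaces.linear_iff by auto
  have th0: "\<theta> 0 = 0" using thsc[of 0 0] by simp
  have injth: "inj \<theta>" using bij by (simp add: bij_betw_def)
  have rng: "range \<theta> = range T" using bij by (simp add: bij_betw_def)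
  have invth: "\<And>m. inv \<theta> (\<theta> m) = m" using injth by simp
  have thinv: "\<And>y. \<theta> (inv \<theta> (T y)) = T y"
    by (metis rng rangeI f_inv_into_f)
  define \<Phi>0 where "\<Phi>0 = (\<lambda>x. \<lambda>h. inv \<theta> (T (act h x)))"
  have uniq: "\<Phi> = \<Phi>0" if D: "dilation_comparison_map scM \<pi> scN act T \<theta> \<Phi>" for \<Phi>
  proof -
    have a: "\<And>h x. \<Phi> (act h x) = hom_act h (\<Phi> x)"
      and b: "\<And>x. T_std \<pi> (\<Phi> x) = \<Phi> (T x)" and c: "\<And>m. \<Phi> (\<theta> m) = std_phi \<pi> m"
      using D unfolding dilation_comparison_map_def by auto
    have e1: "\<Phi> y 1 = inv \<theta> (T y)" for y
    proof -
      have "\<Phi> y 1 = T_std \<pi> (\<Phi> y) 1" by (simp add: T_std_def std_phi_def pi1)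
      also have "\<dots> = \<Phi> (T y) 1" by (simp add: b)
      also have "\<dots> = \<Phi> (\<theta> (inv \<theta> (T y))) 1" by (simp add: thinv)
      also have "\<dots> = inv \<theta> (T y)" by (simp add: c std_phi_def pi1)
      finally show ?thesis .
    qed
    show ?thesis
    proof (rule ext, rule ext)
      fix x h
      have "\<Phi> x h = hom_act h (\<Phi> x) 1" by (simp add: hom_act_def)
      also have "\<dots> = \<Phi> (act h x) 1" by (simp add: a)
      finally show "\<Phi> x h = \<Phi>0 x h" by (simp add: e1 \<Phi>0_def)
    qed
  qed
  have invadd: "inv \<theta> (\<theta> a + \<theta> b) = a + b" for a b by (metis thadd invth)
  have invsc: "inv \<theta> (scN c (\<theta> a)) = scM c a" for c a by (metis thsc invth)
  have lin0: "Vector_Spaces.linear scN (hom_scale scM) \<Phi>0"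
    unfolding Vector_Spaces.linear_iff
  proof (intro conjI allI)
    show "vector_space scN" by (rule vsN)
    show "vector_space (hom_scale scM)" by (rule vsH)
    fix x y
    show "\<Phi>0 (x + y) = \<Phi>0 x + \<Phi>0 y"
    proof (rule ext)
      fix h
      have "T (act h (x + y)) = \<theta> (inv \<theta> (T (act h x))) + \<theta> (inv \<theta> (T (act h y)))"
        by (simp add: aadd Tadd thinv)
      then show "\<Phi>0 (x + y) h = (\<Phi>0 x + \<Phi>0 y) h"
        by (simp add: \<Phi>0_def invadd)
    qed
  next
    fix c x
    show "\<Phi>0 (scN c x) = hom_scale scM c (\<Phi>0 x)"
    proof (rule ext)
      fix h
      have "T (act h (scN c x)) = scN c (\<theta> (inv \<theta> (T (act h x))))"
        by (simp add: asc Tsc thinv)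
      then show "\<Phi>0 (scN c x) h = hom_scale scM c (\<Phi>0 x) h"
        by (simp add: \<Phi>0_def invsc hom_scale_def)
    qed
  qed
  have P0add: "\<And>x y. \<Phi>0 (x + y) = \<Phi>0 x + \<Phi>0 y"
    and P0sc: "\<And>c x. \<Phi>0 (scN c x) = hom_scale scM c (\<Phi>0 x)"
    using lin0 unfolding Vector_Spaces.linear_iff by auto
  have P0act: "\<And>h x. \<Phi>0 (act h x) = hom_act h (\<Phi>0 x)"
    by (simp add: \<Phi>0_def hom_act_def actmul fun_eq_iff)
  have P0th: "\<And>m. \<Phi>0 (\<theta> m) = std_phi \<pi> m"
    by (simp add: \<Phi>0_def std_phi_def fun_eq_iff inter[symmetric] invth)
  have P0T: "\<And>x. T_std \<pi> (\<Phi>0 x) = \<Phi>0 (T x)"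
  proof -
    fix x
    have "\<And>h. T (act h (T x)) = \<theta> (\<pi> h (inv \<theta> (T x)))"
      by (metis inter thinv)
    then show "T_std \<pi> (\<Phi>0 x) = \<Phi>0 (T x)"
      by (simp add: \<Phi>0_def T_std_def std_phi_def act1 fun_eq_iff invth)
  qed
  define G where "G = {hom_act h (std_phi \<pi> m) | h m. True}"
  have Mb: "Mbar scM \<pi> = MH.span G" unfolding Mbar_def G_def by simp
  have hom_act_Mbar: "hom_act k f \<in> MH.span G" if "f \<in> MH.span G" for k f
  proof -
    have "MH.span G \<subseteq> {f. hom_act k f \<in> MH.span G}"
    proof (rule MH.span_minimal)
      show "G \<subseteq> {f. hom_act k f \<in> MH.span G}"
      proof
        fix g assume "g \<in> G"
        then obtain h m where g: "g = hom_act h (std_phi \<pi> m)" unfolding G_def by auto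
        have "hom_act k g = hom_act (k * h) (std_phi \<pi> m)"
          by (simp add: g hom_act_def mult.assoc)
        then show "g \<in> {f. hom_act k f \<in> MH.span G}"
          by (auto intro!: MH.span_base simp: G_def)
      qed
      show "MH.subspace {f. hom_act k f \<in> MH.span G}"
        unfolding MH.subspace_def
      proof (intro conjI ballI allI)
        have "hom_act k 0 = (0::'h \<Rightarrow> 'm)" by (simp add: hom_act_def fun_eq_iff)
        then show "0 \<in> {f. hom_act k f \<in> MH.span G}" by (simp add: MH.span_zero)
      next
        fix x y assume "x \<in> {f. hom_act k f \<in> MH.span G}" "y \<in> {f. hom_act k f \<in> MH.span G}"
        moreover have "hom_act k (x + y) = hom_act k x + hom_act k y"
          by (simp add: hom_act_def fun_eq_iff)
        ultimately show "x + y \<in> {f. hom_act k f \<in> MH.span G}" by (simp add: MH.span_add)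
      next
        fix c x assume "x \<in> {f. hom_act k f \<in> MH.span G}"
        moreover have "hom_act k (hom_scale scM c x) = hom_scale scM c (hom_act k x)"
          by (simp add: hom_act_def hom_scale_def fun_eq_iff)
        ultimately show "hom_scale scM c x \<in> {f. hom_act k f \<in> MH.span G}" by (simp add: MH.span_scale)
      qed
    qed
    then show ?thesis using that by auto
  qed
  have rng0: "range \<Phi>0 = Mbar scM \<pi>"
  proof
    let ?W = "{x. \<Phi>0 x \<in> MH.span G}"
    have "h_submodule scN act ?W"
      unfolding h_submodule_def N.subspace_def
    proof (intro conjI allI ballI impI)
      have "\<Phi>0 0 = 0" using P0sc[of 0 0] by (simp add: hom_scale_def fun_eq_iff)
      then show "0 \<in> ?W" by (simp add: MH.span_zero)
    next
      fix x y assume "x \<in> ?W" "y \<in> ?W" then show "x + y \<in> ?W" by (simp add: P0add MH.span_add)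
    next
      fix c x assume "x \<in> ?W" then show "scN c x \<in> ?W" by (simp add: P0sc MH.span_scale)
    next
      fix h x assume "x \<in> ?W" then show "act h x \<in> ?W" by (simp add: P0act hom_act_Mbar)
    qed
    moreover have "range \<theta> \<subseteq> ?W"
    proof
      fix y assume "y \<in> range \<theta>"
      then obtain m where y: "y = \<theta> m" by auto
      have "std_phi \<pi> m = hom_act 1 (std_phi \<pi> m)" by (simp add: hom_act_def)
      then have "std_phi \<pi> m \<in> G" unfolding G_def by blast
      then show "y \<in> ?W" by (simp add: y P0th MH.span_base)
    qed
    ultimately have "?W = UNIV" using assms(4) unfolding proper_dilation_def by blast
    then show "range \<Phi>0 \<subseteq> Mbar scM \<pi>" by (auto simp: Mb)
  next
    have "MH.span G \<subseteq> range \<Phi>0"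
    proof (rule MH.span_minimal)
      show "G \<subseteq> range \<Phi>0"
      proof
        fix g assume "g \<in> G"
        then obtain h m where g: "g = hom_act h (std_phi \<pi> m)" unfolding G_def by auto
        then have "g = \<Phi>0 (act h (\<theta> m))" by (simp add: P0act P0th)
        then show "g \<in> range \<Phi>0" by auto
      qed
      show "MH.subspace (range \<Phi>0)"
        unfolding MH.subspace_def
      proof (intro conjI ballI allI)
        have "\<Phi>0 0 = 0" using P0sc[of 0 0] by (simp add: hom_scale_def fun_eq_iff)
        then show "0 \<in> range \<Phi>0" by (metis rangeI)
      next
        fix x y assume "x \<in> range \<Phi>0" "y \<in> range \<Phi>0"
        then obtain a b where "x = \<Phi>0 a" "y = \<Phi>0 b" by auto
        then have "x + y = \<Phi>0 (a + b)" by (simp add: P0add)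
        then show "x + y \<in> range \<Phi>0" by auto
      next
        fix c x assume "x \<in> range \<Phi>0"
        then obtain a where "x = \<Phi>0 a" by auto
        then have "hom_scale scM c x = \<Phi>0 (scN c a)" by (simp add: P0sc)
        then show "hom_scale scM c x \<in> range \<Phi>0" by auto
      qed
    qed
    then show "Mbar scM \<pi> \<subseteq> range \<Phi>0" by (simp add: Mb)
  qed
  have D0: "dilation_comparison_map scM \<pi> scN act T \<theta> \<Phi>0"
    unfolding dilation_comparison_map_def
    using lin0 P0act rng0 P0T P0th by blast
  have part1: "\<exists>!\<Phi>. dilation_comparison_map scM \<pi> scN act T \<theta> \<Phi>"
    using D0 uniq by blast
  have ker: "\<Phi>0 x = 0 \<longleftrightarrow> (\<forall>h. T (act h x) = 0)" for x
  proof
    assume "\<Phi>0 x = 0"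
    then have "\<And>h. inv \<theta> (T (act h x)) = 0" by (simp add: \<Phi>0_def fun_eq_iff)
    then show "\<forall>h. T (act h x) = 0" by (metis thinv th0)
  next
    assume "\<forall>h. T (act h x) = 0"
    then show "\<Phi>0 x = 0" by (simp add: \<Phi>0_def fun_eq_iff) (metis th0 invth)
  qed
  have inj_iff: "inj \<Phi>0 \<longleftrightarrow> (\<forall>x. \<Phi>0 x = 0 \<longrightarrow> x = 0)"
  proof
    assume "inj \<Phi>0"
    moreover have "\<Phi>0 0 = 0" using P0sc[of 0 0] by (simp add: hom_scale_def fun_eq_iff)
    ultimately show "\<forall>x. \<Phi>0 x = 0 \<longrightarrow> x = 0" by (metis injD)
  next
    assume H: "\<forall>x. \<Phi>0 x = 0 \<longrightarrow> x = 0"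
    show "inj \<Phi>0"
    proof (rule injI)
      fix x y assume "\<Phi>0 x = \<Phi>0 y"
      assume E: "\<Phi>0 x = \<Phi>0 y"
      have "\<Phi>0 (x + scN (-1) y) = \<Phi>0 x + hom_scale scM (-1) (\<Phi>0 y)"
        by (simp only: P0add P0sc)
      also have "\<dots> = 0" unfolding E
        by (simp add: hom_scale_def fun_eq_iff M.scale_minus_left)
      finally have "\<Phi>0 (x + scN (-1) y) = 0" .
      then have "x + scN (-1) y = 0" using H by blast
      then show "x = y" by (simp add: N.scale_minus_left)
    qed
  qed
  have part2: "inj \<Phi>0 \<longleftrightarrow> minimal_dilation scN act T"
  proof
    assume I: "inj \<Phi>0"
    show "minimal_dilation scN act T"
      unfolding minimal_dilation_def
    proof (intro allI impI)
      fix W assume A: "h_submodule scN act W \<and> T ` W \<subseteq> {0}"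
      then have W0: "0 \<in> W" and cl: "\<And>h x. x \<in> W \<Longrightarrow> act h x \<in> W"
        unfolding h_submodule_def N.subspace_def by auto
      have "x = 0" if "x \<in> W" for x
      proof -
        have "\<forall>h. T (act h x) = 0" using A cl[OF that] by auto
        then show ?thesis using ker inj_iff I by blast
      qed
      then show "W = {0}" using W0 by auto
    qed
  next
    assume Mi: "minimal_dilation scN act T"
    let ?K = "{x. \<Phi>0 x = 0}"
    have "h_submodule scN act ?K"
      unfolding h_submodule_def N.subspace_def
    proof (intro conjI allI ballI impI)
      show "0 \<in> ?K" using P0sc[of 0 0] by (simp add: hom_scale_def fun_eq_iff)
    next
      fix x y assume "x \<in> ?K" "y \<in> ?K" then show "x + y \<in> ?K" by (simp add: P0add)
    next
      fix c x assume "x \<in> ?K" then show "scN c x \<in> ?K"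
        by (simp add: P0sc hom_scale_def fun_eq_iff)
    next
      fix h x assume "x \<in> ?K" then show "act h x \<in> ?K"
        by (simp add: P0act hom_act_def fun_eq_iff)
    qed
    moreover have "T ` ?K \<subseteq> {0}"
    proof
      fix y assume "y \<in> T ` ?K"
      then obtain x where "\<Phi>0 x = 0" "y = T x" by auto
      then show "y \<in> {0}" using ker[of x] act1 by (metis singletonI)
    qed
    ultimately have "?K = {0}" using Mi unfolding minimal_dilation_def by blast
    then show "inj \<Phi>0" using inj_iff by auto
  qed
  show ?thesis using part1 part2 uniq by blast
qed

end
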